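(* For every $\varepsilon>0$ and every $1<p<\infty$, letting $q$ satisfy $1/p+1/q=1$, there exist $N\in\mathbb{N}$ and positive numbers $a_1\ge a_2\ge\dots\ge a_N>0$ such that $$\sum_{n=1}^N a_n>\varepsilon^{-2}\qquad\text{and}\qquad \sum_{n=1}^N\Big(\sum_{j=n}^N a_j^q\Big)^{p/q}<\varepsilon^p.$$ *)

theory Defs
  imports "HOL-Analysis.Analysis"
begin

end

theory Submission
  imports Defs
begin

lemma step_bound:
  fixes q x :: real
  assumes q: "q > 1" and x: "x \<ge> 1"
  shows "(x+1) powr (-q) \<le> (x powr (1-q) - (x+1) powr (1-q)) / (q-1)"
proof -
  have D: "\<forall>t. x \<le> t \<and> t \<le> x+1 \<longrightarrow> ((\<lambda>t. t powr (1-q)) has_real_derivative (1-q) * t powr (1-q-1)) (at t)"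
  proof (intro allI impI)
    fix t assume "x \<le> t \<and> t \<le> x+1"
    then have "t > 0" using x by auto
    then show "((\<lambda>t. t powr (1-q)) has_real_derivative (1-q) * t powr (1-q-1)) (at t)"
      by (rule has_real_derivative_powr)
  qed
  then obtain z where z: "x < z" "z < x+1"
    and eq: "(x+1) powr (1-q) - x powr (1-q) = (x+1-x) * ((1-q) * z powr (1-q-1))"
    using MVT2[of x "x+1" "\<lambda>t. t powr (1-q)" "\<lambda>t. (1-q) * t powr (1-q-1)"] D by auto
  have "(x+1) powr (-q) \<le> z powr (-q)"
    using z x q by (intro powr_mono2') auto
  moreover have "x powr (1-q) - (x+1) powr (1-q) = (q-1) * z powr (-q)"
    using eq by (simp add: algebra_simps)
  ultimately have "(q-1) * (x+1) powr (-q) \<le> x powr (1-q) - (x+1) powr (1-q)"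
    using q by (metis diff_gt_0_iff_gt less_eq_real_def mult_left_mono)
  then show ?thesis using q by (simp add: pos_le_divide_eq mult.commute)
qed

lemma tail_bound:
  fixes q :: real
  assumes q: "q > 1" and n: "1 \<le> n" and nN: "n \<le> N"
  shows "(\<Sum>j=n..N. real j powr (-q)) \<le> real n powr (-q) + (real n powr (1-q) - real N powr (1-q)) / (q-1)"
  using nN
proof (induction N rule: dec_induct)
  case base
  then show ?case by simp
next
  case (step m)
  have "(\<Sum>j=n..Suc m. real j powr (-q)) = (\<Sum>j=n..m. real j powr (-q)) + (real m + 1) powr (-q)"
    using step by (simp add: add.commute)
  also have "\<dots> \<le> real n powr (-q) + (real n powr (1-q) - real m powr (1-q)) / (q-1)
       + (real m powr (1-q) - (real m+1) powr (1-q)) / (q-1)"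
    using step.IH step_bound[OF q, of "real m"] step n by auto
  also have "\<dots> = real n powr (-q) + (real n powr (1-q) - real (Suc m) powr (1-q)) / (q-1)"
    by (simp add: add_divide_distrib[symmetric] add.commute)
  finally show ?case .
qed

lemma tail_bound2:
  fixes q p c :: real
  assumes q: "q > 1" and pq: "p = q / (q - 1)" and c: "c > 0" and n: "1 \<le> n" and nN: "n \<le> N"
  shows "(\<Sum>j=n..N. (c / real j) powr q) \<le> c powr q * p * real n powr (1-q)"
proof -
  have "(\<Sum>j=n..N. (c / real j) powr q) = c powr q * (\<Sum>j=n..N. real j powr (-q))"
    using n by (simp add: sum_distrib_left powr_divide powr_minus_divide)
  also have "\<dots> \<le> c powr q * (real n powr (-q) + (real n powr (1-q) - real N powr (1-q)) / (q-1))"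
    using tail_bound[OF q n nN] c by (intro mult_left_mono) auto
  also have "\<dots> \<le> c powr q * (real n powr (1-q) + real n powr (1-q) / (q-1))"
  proof -
    have "real n powr (-q) \<le> real n powr (1-q)" using n by (intro powr_mono) auto
    moreover have "0 \<le> real N powr (1-q) / (q-1)" using q by auto
    ultimately have "real n powr (-q) + (real n powr (1-q) - real N powr (1-q)) / (q-1)
        \<le> real n powr (1-q) + real n powr (1-q) / (q-1)"
      by (simp add: diff_divide_distrib)
    then show ?thesis using c by (intro mult_left_mono) auto
  qed
  also have "real n powr (1-q) + real n powr (1-q) / (q-1) = p * real n powr (1-q)"
    using q pq by (simp add: field_simps) (metis distrib_right mult.assoc)
  finally show ?thesis by (simp add: mult.assoc)
qed

theorem lemma3p1:
  fixes \<epsilon> p q :: real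
  assumes "\<epsilon> > 0" and "1 < p" and "1 / p + 1 / q = 1"
  shows "\<exists>(N::nat) (a::nat \<Rightarrow> real).
           (\<forall>n\<in>{1..N}. a n > 0) \<and>
           (\<forall>n m. 1 \<le> n \<and> n \<le> m \<and> m \<le> N \<longrightarrow> a m \<le> a n) \<and>
           (\<Sum>n=1..N. a n) > 1 / \<epsilon>\<^sup>2 \<and>
           (\<Sum>n=1..N. (\<Sum>j=n..N. a j powr q) powr (p / q)) < \<epsilon> powr p"
proof -
  have eps: "\<epsilon> > 0" and p1: "p > 1" using assms by auto
  have qdef: "q = p / (p - 1)"
  proof -
    have "1/q = 1 - 1/p" using assms by simp
    also have "\<dots> = (p-1)/p" using p1 by (simp add: field_simps)
    finally have e: "1/q = (p-1)/p" .
    have "q = 1/(1/q)" by simp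
    also have "\<dots> = p/(p-1)" unfolding e by simp
    finally show ?thesis .
  qed
  have qm1: "q - 1 = 1/(p-1)" unfolding qdef using p1 by (simp add: field_simps)
  have "1/(p-1) > 0" using p1 by simp
  then have q1: "q > 1" using qm1 by linarith
  have pq: "p = q / (q - 1)" unfolding qm1 unfolding qdef using p1 by simp
  have expo: "(1 - q) * (p / q) = -1" using qm1 unfolding qdef using p1 by (simp add: field_simps)
  define K where "K = p powr (p / q)"
  define M where "M = 2 / \<epsilon>\<^sup>2"
  define B where "B = M powr p * K / \<epsilon> powr p"
  have Kpos: "K > 0" using p1 K_def by simp
  have Mpos: "M > 0" using eps M_def by simp
  have Bpos: "B > 0" using Kpos Mpos eps B_def by simp
  define B' where "B' = B powr (1 / (p - 1))"
  have B'pos: "B' > 0" using Bpos B'_def by simp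
  define N where "N = nat \<lceil>exp (B' + 1)\<rceil>"
  have "exp (B' + 1) \<le> real N" unfolding N_def by linarith
  have NB: "exp (B' + 1) \<le> real N" unfolding N_def by linarith
  have "exp (B' + 1) > 1" using B'pos by simp
  then have N1: "N \<ge> 1" using NB by linarith
  define H where "H = (harm N :: real)"
  have "B' + 1 \<le> ln (real N + 1)"
  proof -
    have "B' + 1 = ln (exp (B' + 1))" by simp
    also have "\<dots> \<le> ln (real N + 1)" using NB by (subst ln_le_cancel_iff) auto
    finally show ?thesis .
  qed
  then have HB: "H > B'" using ln_le_harm[of N] H_def by linarith
  have Hpos: "H > 0" using HB B'pos by linarith
  define c where "c = M / H"
  have cpos: "c > 0" using Mpos Hpos c_def by simp
  define a where "a = (\<lambda>j::nat. c / real j)"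
  have sum1: "(\<Sum>n=1..N. a n) = M"
  proof -
    have "(\<Sum>n=1..N. a n) = c * H"
      unfolding a_def H_def harm_def by (simp add: sum_distrib_left divide_inverse)
    then show ?thesis using c_def Hpos by simp
  qed
  have "M > 1 / \<epsilon>\<^sup>2" using eps M_def by (simp add: divide_strict_right_mono)
  have tailb: "(\<Sum>j=n..N. a j powr q) powr (p / q) \<le> c powr p * K * inverse (real n)"
    if n: "n \<in> {1..N}" for n
  proof -
    have "(\<Sum>j=n..N. a j powr q) powr (p / q) \<le> (c powr q * p * real n powr (1-q)) powr (p / q)"
      unfolding a_def using tail_bound2[OF q1 pq cpos, of n N] n p1 q1
      by (intro powr_mono2) (auto intro!: sum_nonneg)
    also have "\<dots> = (c powr q) powr (p/q) * K * (real n powr (1-q)) powr (p/q)"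
      using cpos p1 n unfolding K_def by (simp add: powr_mult)
    also have "\<dots> = c powr p * K * inverse (real n)"
      using q1 n expo by (simp add: powr_powr powr_minus)
    finally show ?thesis .
  qed
  have "(\<Sum>n=1..N. (\<Sum>j=n..N. a j powr q) powr (p / q)) \<le> (\<Sum>n=1..N. c powr p * K * inverse (real n))"
    using tailb by (intro sum_mono) auto
  also have "\<dots> = c powr p * K * H"
    unfolding H_def harm_def by (simp add: sum_distrib_left)
  also have "\<dots> = M powr p * K / H powr (p - 1)"
  proof -
    have hp: "H powr (p-1) = H powr p / H" using Hpos by (simp add: powr_diff)
    have "c powr p = M powr p / H powr p" unfolding c_def using Hpos Mpos by (simp add: powr_divide)
    moreover have "H powr p > 0" using Hpos by simp
    ultimately show ?thesis unfolding hp using Hpos by (simp add: field_simps)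
  qed
  also have "\<dots> < M powr p * K / B"
  proof -
    have "B' powr (p - 1) < H powr (p - 1)" using HB B'pos p1 by (intro powr_less_mono2) auto
    moreover have "B' powr (p - 1) = B" unfolding B'_def using p1 Bpos by (simp add: powr_powr)
    ultimately have "B < H powr (p-1)" by simp
    moreover have "0 < H powr (p-1) * B" using Hpos Bpos by simp
    ultimately show ?thesis using Mpos Kpos by (intro divide_strict_left_mono) auto
  qed
  also have "\<dots> = \<epsilon> powr p" unfolding B_def using Mpos Kpos eps by simp
  finally have fin: "(\<Sum>n=1..N. (\<Sum>j=n..N. a j powr q) powr (p / q)) < \<epsilon> powr p" .
  show ?thesis
  proof (intro exI conjI)
    show "\<forall>n\<in>{1..N}. a n > 0" using cpos a_def by auto
    show "\<forall>n m. 1 \<le> n \<and> n \<le> m \<and> m \<le> N \<longrightarrow> a m \<le> a n"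
      using cpos unfolding a_def by (auto intro!: divide_left_mono)
    show "(\<Sum>n=1..N. a n) > 1 / \<epsilon>\<^sup>2" using sum1 \<open>M > 1 / \<epsilon>\<^sup>2\<close> by simp
  qed (rule fin)
qed

end
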